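(* Let $E/\mathbb{Q}(j_{K,f})$ be an elliptic curve with CM by $\mathcal{O}_{K,f}$, $j_{K,f}\neq0,1728$, with a standard compatible choice of bases. Suppose $M,M'\ge2$ are both adelic levels of definition for $E$, and let $d=\gcd(M,M')$. If $d\ge3$ then $d$ is an adelic level of definition for $E$; if $d=2$ then $4$ is an adelic level of definition for $E$.
   Context: $\delta,\phi$: $\delta=\Delta_Kf^2/4,\phi=0$ if $\Delta_Kf^2\equiv0\pmod4$, else $\delta=(\Delta_K-1)f^2/4,\phi=f$. $\mathcal{N}_{\delta,\phi}(R)=\langle\mathcal{C}_{\delta,\phi}(R),\begin{pmatrix}1&0\\-\phi&-1\end{pmatrix}\rangle$ with $\mathcal{C}_{\delta,\phi}(R)$ the invertible matrices $\begin{pmatrix}a+b\phi&b\\ \delta b&a\end{pmatrix}$, $a,b\in R$. Standard bases: a compatible system making $G_E=\rho_E(\operatorname{Gal}(\overline{F}/F))\subseteq\mathcal{N}_{\delta,\phi}(\widehat{\mathbb{Z}})$, $F=\mathbb{Q}(j_{K,f})$, with $G_{E,N}=\pi_N(G_E)$ ($\pi_N$ reduction mod $N$). $N$ is an adelic level of definition if $G_E=\pi_N^{-1}(\pi_N(G_E))$. *)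

theory Defs
  imports "HOL-Computational_Algebra.Computational_Algebra"
begin

text \<open>Profinite integers and 2x2 matrices over them, realised as compatible
  systems of residues modulo every n > 0 (the inverse limit of Z/nZ).
  A 2x2 integer matrix [[a,b],[c,d]] is encoded as the tuple (a,b,c,d).\<close>

type_synonym m2 = "int \<times> int \<times> int \<times> int"

definition m2mod :: "nat \<Rightarrow> m2 \<Rightarrow> m2" where
  "m2mod n A = (case A of (a,b,c,d) \<Rightarrow>
     (a mod int n, b mod int n, c mod int n, d mod int n))"

definition m2mult :: "m2 \<Rightarrow> m2 \<Rightarrow> m2" where
  "m2mult A B = (case A of (a,b,c,d) \<Rightarrow> case B of (e,f,g,h) \<Rightarrow>
     (a*e + b*g, a*f + b*h, c*e + d*g, c*f + d*h))"

definition m2det :: "m2 \<Rightarrow> int" where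
  "m2det A = (case A of (a,b,c,d) \<Rightarrow> a*d - b*c)"

definition zhat :: "(nat \<Rightarrow> int) set" where
  "zhat = {x. x 0 = 0 \<and> (\<forall>n>0. x n = x n mod int n) \<and>
              (\<forall>m n. 0 < m \<longrightarrow> 0 < n \<longrightarrow> m dvd n \<longrightarrow> x m = x n mod int m)}"

definition M2hat :: "(nat \<Rightarrow> m2) set" where
  "M2hat = {g. g 0 = (0,0,0,0) \<and> (\<forall>n>0. g n = m2mod n (g n)) \<and>
              (\<forall>m n. 0 < m \<longrightarrow> 0 < n \<longrightarrow> m dvd n \<longrightarrow> g m = m2mod m (g n))}"

definition GL2hat :: "(nat \<Rightarrow> m2) set" where
  "GL2hat = {g \<in> M2hat. \<forall>n>0. coprime (m2det (g n)) (int n)}"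

definition hmult :: "(nat \<Rightarrow> m2) \<Rightarrow> (nat \<Rightarrow> m2) \<Rightarrow> (nat \<Rightarrow> m2)" where
  "hmult g h = (\<lambda>n. if n = 0 then (0,0,0,0) else m2mod n (m2mult (g n) (h n)))"

definition hone :: "nat \<Rightarrow> m2" where
  "hone = (\<lambda>n. if n = 0 then (0,0,0,0) else m2mod n (1,0,0,1))"

definition piN :: "nat \<Rightarrow> (nat \<Rightarrow> m2) \<Rightarrow> m2" where
  "piN N g = g N"

definition delta_of :: "int \<Rightarrow> int \<Rightarrow> int" where
  "delta_of D f = (if (D * f^2) mod 4 = 0 then D * f^2 div 4 else (D - 1) * f^2 div 4)"

definition phi_of :: "int \<Rightarrow> int \<Rightarrow> int" where
  "phi_of D f = (if (D * f^2) mod 4 = 0 then 0 else f)"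

definition Cartan_hat :: "int \<Rightarrow> int \<Rightarrow> (nat \<Rightarrow> m2) set" where
  "Cartan_hat \<delta> \<phi> = {g \<in> GL2hat. \<exists>a\<in>zhat. \<exists>b\<in>zhat.
      \<forall>n>0. g n = m2mod n (a n + b n * \<phi>, b n, \<delta> * b n, a n)}"

definition sigma_hat :: "int \<Rightarrow> nat \<Rightarrow> m2" where
  "sigma_hat \<phi> = (\<lambda>n. if n = 0 then (0,0,0,0) else m2mod n (1, 0, -\<phi>, -1))"

inductive_set gen_subgroup :: "(nat \<Rightarrow> m2) set \<Rightarrow> (nat \<Rightarrow> m2) set" for S where
  gen_base: "g \<in> S \<Longrightarrow> g \<in> gen_subgroup S"
| gen_one: "hone \<in> gen_subgroup S"
| gen_mult: "g \<in> gen_subgroup S \<Longrightarrow> h \<in> gen_subgroup S \<Longrightarrow> hmult g h \<in> gen_subgroup S"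
| gen_inv: "g \<in> gen_subgroup S \<Longrightarrow> h \<in> GL2hat \<Longrightarrow> hmult g h = hone \<Longrightarrow> h \<in> gen_subgroup S"

definition Normalizer_hat :: "int \<Rightarrow> int \<Rightarrow> (nat \<Rightarrow> m2) set" where
  "Normalizer_hat \<delta> \<phi> = gen_subgroup (Cartan_hat \<delta> \<phi> \<union> {sigma_hat \<phi>})"

definition closed_subgroup_hat :: "(nat \<Rightarrow> m2) set \<Rightarrow> bool" where
  "closed_subgroup_hat G \<longleftrightarrow> G \<subseteq> GL2hat \<and> hone \<in> G \<and>
     (\<forall>g\<in>G. \<forall>h\<in>G. hmult g h \<in> G) \<and> (\<forall>g\<in>G. \<exists>h\<in>G. hmult g h = hone) \<and>
     (\<forall>g\<in>GL2hat. (\<forall>n>0. \<exists>h\<in>G. h n = g n) \<longrightarrow> g \<in> G)"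

definition adelic_level :: "int \<Rightarrow> int \<Rightarrow> (nat \<Rightarrow> m2) set \<Rightarrow> nat \<Rightarrow> bool" where
  "adelic_level \<delta> \<phi> G N \<longleftrightarrow>
     G = {h \<in> Normalizer_hat \<delta> \<phi>. \<exists>g\<in>G. piN N h = piN N g}"

definition fundamental_discriminant :: "int \<Rightarrow> bool" where
  "fundamental_discriminant D \<longleftrightarrow> D \<noteq> 1 \<and>
     ((D mod 4 = 1 \<and> squarefree D) \<or>
      (D mod 4 = 0 \<and> (D div 4) mod 4 \<in> {2,3} \<and> squarefree (D div 4)))"

end

theory Submission
  imports Defs "HOL-Number_Theory.Number_Theory"
begin

lemma idem_nat:
  fixes m t :: nat
  assumes m: "m > 0" and t: "t > 0"
  shows "m dvd t ^ fact m * (t ^ fact m - 1)"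
proof (cases "t ^ fact m * (t ^ fact m - 1) = 0")
  case True then show ?thesis by (metis dvd_0_right)
next
  case Y: False
  let ?K = "fact m :: nat"
  show ?thesis
  proof (rule multiplicity_le_imp_dvd)
    show "m \<noteq> 0" using m by simp
    fix p :: nat assume p: "prime p"
    define a where "a = multiplicity p m"
    have pa: "p ^ a dvd m" unfolding a_def by (rule multiplicity_dvd)
    have "p ^ a \<le> m" using pa m by (simp add: dvd_imp_le)
    moreover have "a < p ^ a"
    proof -
      have "a < 2 ^ a" by (rule less_exp)
      also have "\<dots> \<le> p ^ a" using prime_ge_2_nat[OF p] by (simp add: power_mono)
      finally show ?thesis .
    qed
    moreover have "m \<le> ?K" by (rule fact_ge_self)
    ultimately have aK: "a \<le> ?K" and paK: "p ^ a \<le> ?K" by linarith+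
    have "p ^ a dvd t ^ fact m * (t ^ fact m - 1)"
    proof (cases "p dvd t")
      case True
      then have "p ^ a dvd t ^ a" by (simp add: dvd_power_same)
      also have "t ^ a dvd t ^ ?K" using aK by (simp add: le_imp_power_dvd)
      finally show ?thesis by simp
    next
      case False
      then have "coprime p t" using p by (simp add: prime_imp_coprime)
      then have "coprime t (p ^ a)" by (simp add: ac_simps)
      then have e: "[t ^ totient (p ^ a) = 1] (mod p ^ a)" by (rule euler_theorem)
      have "totient (p ^ a) dvd ?K"
      proof (rule dvd_fact)
        show "1 \<le> totient (p ^ a)" using p by (simp add: Suc_le_eq prime_gt_0_nat)
        show "totient (p ^ a) \<le> m" using totient_le[of "p ^ a"] \<open>p ^ a \<le> m\<close> by linarith
      qed
      then obtain j where j: "?K = totient (p ^ a) * j" by blast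
      have "[t ^ ?K = 1] (mod p ^ a)" unfolding j power_mult
        using cong_pow[OF e, of j] by simp
      moreover have "t ^ ?K \<ge> 1" using t by simp
      ultimately have "p ^ a dvd t ^ ?K - 1" by (simp add: cong_altdef_nat)
      then show ?thesis by simp
    qed
    then show "multiplicity p m \<le> multiplicity p (t ^ fact m * (t ^ fact m - 1))"
      unfolding a_def using Y p
      by (intro iffD1[OF power_dvd_iff_le_multiplicity]) (auto simp: a_def)
  qed
qed

definition I2 :: m2 where "I2 = (1,0,0,1)"
definition adj2 :: "m2 \<Rightarrow> m2" where "adj2 X = (case X of (a,b,c,d) \<Rightarrow> (d,-b,-c,a))"
definition sm2 :: "int \<Rightarrow> m2 \<Rightarrow> m2" where "sm2 u X = (case X of (a,b,c,d) \<Rightarrow> (u*a,u*b,u*c,u*d))"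
definition cart :: "int \<Rightarrow> int \<Rightarrow> int \<Rightarrow> int \<Rightarrow> m2" where
  "cart \<phi> \<delta> a b = (a + b*\<phi>, b, \<delta>*b, a)"
definition ss :: "int \<Rightarrow> int \<Rightarrow> int \<Rightarrow> int \<Rightarrow> m2" where
  "ss \<phi> \<delta> a b = (a + b*\<phi>, b, -\<phi>*(a+b*\<phi>) - \<delta>*b, -\<phi>*b - a)"

lemma h1: "((a::int) mod n * b + c mod n * d) mod n = (a*b+c*d) mod n"
  by (metis mod_add_eq mod_mult_left_eq)
lemma h2: "((a::int) * (b mod n) + c * (d mod n)) mod n = (a*b+c*d) mod n"
  by (metis mod_add_eq mod_mult_right_eq)
lemma h4: "((a::int) mod n * (d mod n) - b mod n * (c mod n)) mod n = (a*d-b*c) mod n"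
  by (metis mod_diff_eq mod_mult_eq)
lemma mm_mod: "m2mod n (m2mult (m2mod n X) (m2mod n Y)) = m2mod n (m2mult X Y)"
  by (cases X rule: prod_cases4; cases Y rule: prod_cases4) (simp add: m2mod_def m2mult_def mod_simps h1 h2)
lemma mm_modL: "m2mod n (m2mult (m2mod n X) Y) = m2mod n (m2mult X Y)"
  by (cases X rule: prod_cases4; cases Y rule: prod_cases4) (simp add: m2mod_def m2mult_def mod_simps h1 h2)
lemma mm_modR: "m2mod n (m2mult X (m2mod n Y)) = m2mod n (m2mult X Y)"
  by (cases X rule: prod_cases4; cases Y rule: prod_cases4) (simp add: m2mod_def m2mult_def mod_simps h1 h2)
lemma m2mod_mod: "m dvd n \<Longrightarrow> m2mod m (m2mod n X) = m2mod m X"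
  by (cases X rule: prod_cases4) (simp add: m2mod_def mod_mod_cancel)
lemma m2mod_idem: "m2mod n (m2mod n X) = m2mod n X"
  by (simp add: m2mod_mod)
lemma m2mult_assoc: "m2mult (m2mult X Y) Z = m2mult X (m2mult Y Z)"
  by (cases X rule: prod_cases4; cases Y rule: prod_cases4; cases Z rule: prod_cases4)
     (simp add: m2mult_def algebra_simps)
lemma m2mod_eq_iff: "m2mod n (a,b,c,d) = m2mod n (a',b',c',d') \<longleftrightarrow>
   int n dvd a - a' \<and> int n dvd b - b' \<and> int n dvd c - c' \<and> int n dvd d - d'"
  by (simp add: m2mod_def mod_eq_dvd_iff)
lemma det_mod: "m2det (m2mod n X) mod int n = m2det X mod int n"
  by (cases X rule: prod_cases4) (simp add: m2mod_def m2det_def h4)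
lemma det_mult: "m2det (m2mult X Y) = m2det X * m2det Y"
  by (cases X rule: prod_cases4; cases Y rule: prod_cases4) (simp add: m2mult_def m2det_def algebra_simps)
lemma adj_mult: "m2mult (adj2 X) X = sm2 (m2det X) I2"
  by (cases X rule: prod_cases4) (simp add: m2mult_def m2det_def adj2_def sm2_def I2_def algebra_simps)
lemma sm2_multL: "m2mult (sm2 u X) Y = sm2 u (m2mult X Y)"
  by (cases X rule: prod_cases4; cases Y rule: prod_cases4) (simp add: m2mult_def sm2_def algebra_simps)
lemma sm2_sm2: "sm2 u (sm2 v X) = sm2 (u*v) X"
  by (cases X rule: prod_cases4) (simp add: sm2_def algebra_simps)
lemma sm2_mod: "m2mod n (sm2 u X) = m2mod n (sm2 (u mod int n) X)"
  by (cases X rule: prod_cases4) (simp add: m2mod_def sm2_def mod_simps)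
lemma sm2_mod2: "m2mod n (sm2 u (m2mod n X)) = m2mod n (sm2 u X)"
  by (cases X rule: prod_cases4) (simp add: m2mod_def sm2_def mod_simps)
lemma sm2_1: "sm2 1 X = X"
  by (cases X rule: prod_cases4) (simp add: sm2_def)
lemma I2_mult: "m2mult I2 X = X"
  by (cases X rule: prod_cases4) (simp add: m2mult_def I2_def)
lemma mult_I2: "m2mult X I2 = X"
  by (cases X rule: prod_cases4) (simp add: m2mult_def I2_def)
lemma det_I2: "m2det I2 = 1" by (simp add: m2det_def I2_def)

lemma inv_form:
  assumes "m2mod n (m2mult X Y) = m2mod n I2"
  shows "m2mod n Y = m2mod n (sm2 (m2det Y) (adj2 X))"
proof -
  have "m2mod n (sm2 (m2det X) Y) = m2mod n (m2mult (adj2 X) (m2mult X Y))"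
    by (simp add: m2mult_assoc[symmetric] adj_mult sm2_multL I2_mult)
  also have "\<dots> = m2mod n (m2mult (adj2 X) (m2mod n (m2mult X Y)))" by (simp add: mm_modR)
  also have "\<dots> = m2mod n (adj2 X)" by (simp add: assms mm_modR mult_I2)
  finally have 1: "m2mod n (sm2 (m2det X) Y) = m2mod n (adj2 X)" .
  have "m2det (m2mod n (m2mult X Y)) mod int n = m2det (m2mod n I2) mod int n" by (simp add: assms)
  then have dd: "(m2det Y * m2det X) mod int n = 1 mod int n"
    by (simp add: det_mod det_mult det_I2 mult.commute)
  have "m2mod n Y = m2mod n (sm2 ((m2det Y * m2det X) mod int n) Y)"
    by (simp add: dd sm2_mod[symmetric] sm2_1)
  also have "\<dots> = m2mod n (sm2 (m2det Y) (sm2 (m2det X) Y))"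
    by (simp add: sm2_mod[symmetric] sm2_sm2)
  also have "\<dots> = m2mod n (sm2 (m2det Y) (m2mod n (sm2 (m2det X) Y)))" by (simp add: sm2_mod2)
  also have "\<dots> = m2mod n (sm2 (m2det Y) (adj2 X))" by (simp add: 1 sm2_mod2)
  finally show ?thesis .
qed

lemma flip:
  assumes "m2mod n (m2mult X Y) = m2mod n I2"
  shows "m2mod n (m2mult Y X) = m2mod n I2"
proof -
  have "m2mod n (m2mult Y X) = m2mod n (m2mult (m2mod n Y) X)" by (simp add: mm_modL)
  also have "\<dots> = m2mod n (m2mult (sm2 (m2det Y) (adj2 X)) X)"
    by (metis inv_form[OF assms] mm_modL)
  also have "\<dots> = m2mod n (sm2 (m2det Y * m2det X) I2)"
    by (simp add: sm2_multL adj_mult sm2_sm2)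
  also have "\<dots> = m2mod n I2"
  proof -
    have "m2det (m2mod n (m2mult X Y)) mod int n = m2det (m2mod n I2) mod int n" by (simp add: assms)
    then have dd: "(m2det Y * m2det X) mod int n = 1 mod int n"
      by (simp add: det_mod det_mult det_I2 mult.commute)
    show ?thesis by (subst sm2_mod) (simp add: dd sm2_mod[symmetric] sm2_1)
  qed
  finally show ?thesis .
qed

lemma cart_cart: "m2mult (cart \<phi> \<delta> a b) (cart \<phi> \<delta> c d) = cart \<phi> \<delta> (a*c + \<delta>*b*d) (a*d + b*c + \<phi>*b*d)"
  by (simp add: m2mult_def cart_def algebra_simps)
lemma cart_ss: "m2mult (cart \<phi> \<delta> a b) (ss \<phi> \<delta> c d) =
   ss \<phi> \<delta> ((a+b*\<phi>)*c - \<delta>*b*d) ((a+b*\<phi>)*d - b*c - \<phi>*b*d)"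
  by (simp add: m2mult_def cart_def ss_def algebra_simps)
lemma ss_cart: "m2mult (ss \<phi> \<delta> a b) (cart \<phi> \<delta> c d) = ss \<phi> \<delta> (a*c + \<delta>*b*d) (a*d + b*c + \<phi>*b*d)"
  by (simp add: m2mult_def cart_def ss_def algebra_simps)
lemma ss_ss: "m2mult (ss \<phi> \<delta> a b) (ss \<phi> \<delta> c d) =
   cart \<phi> \<delta> ((a+b*\<phi>)*c - \<delta>*b*d) ((a+b*\<phi>)*d - b*c - \<phi>*b*d)"
  by (simp add: m2mult_def cart_def ss_def algebra_simps)
lemma adj_cart: "adj2 (cart \<phi> \<delta> a b) = cart \<phi> \<delta> (a+b*\<phi>) (-b)"
  by (simp add: adj2_def cart_def algebra_simps)
lemma adj_ss: "adj2 (ss \<phi> \<delta> a b) = ss \<phi> \<delta> (-a) (-b)"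
  by (simp add: adj2_def ss_def algebra_simps)
lemma sm2_cart: "sm2 u (cart \<phi> \<delta> a b) = cart \<phi> \<delta> (u*a) (u*b)"
  by (simp add: sm2_def cart_def algebra_simps)
lemma sm2_ss: "sm2 u (ss \<phi> \<delta> a b) = ss \<phi> \<delta> (u*a) (u*b)"
  by (simp add: sm2_def ss_def algebra_simps)

lemma hone_n: "n > 0 \<Longrightarrow> hone n = m2mod n I2" by (simp add: hone_def I2_def)
lemma hmult_n: "n > 0 \<Longrightarrow> hmult g h n = m2mod n (m2mult (g n) (h n))" by (simp add: hmult_def)

lemma hmult_assoc: "hmult g (hmult h k) = hmult (hmult g h) k"
proof
  fix n show "hmult g (hmult h k) n = hmult (hmult g h) k n"
  proof (cases "n = 0")
    case True then show ?thesis by (simp add: hmult_def)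
  next
    case False
    then have "hmult g (hmult h k) n = m2mod n (m2mult (g n) (m2mod n (m2mult (h n) (k n))))"
      by (simp add: hmult_n)
    also have "\<dots> = m2mod n (m2mult (g n) (m2mult (h n) (k n)))" by (rule mm_modR)
    also have "\<dots> = m2mod n (m2mult (m2mult (g n) (h n)) (k n))" by (simp only: m2mult_assoc)
    also have "\<dots> = m2mod n (m2mult (m2mod n (m2mult (g n) (h n))) (k n))" by (rule mm_modL[symmetric])
    also have "\<dots> = hmult (hmult g h) k n" using False by (simp add: hmult_n)
    finally show ?thesis .
  qed
qed

lemma M2hat_D: assumes "g \<in> M2hat"
  shows "g 0 = (0,0,0,0)" "\<forall>n>0. g n = m2mod n (g n)"
    "\<forall>m n. 0 < m \<longrightarrow> 0 < n \<longrightarrow> m dvd n \<longrightarrow> g m = m2mod m (g n)"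
  using assms unfolding M2hat_def by blast+
lemma M2hat_n: "g \<in> M2hat \<Longrightarrow> n > 0 \<Longrightarrow> m2mod n (g n) = g n"
  using M2hat_D(2)[of g] by metis
lemma M2hat_dvd: "g \<in> M2hat \<Longrightarrow> m > 0 \<Longrightarrow> n > 0 \<Longrightarrow> m dvd n \<Longrightarrow> g m = m2mod m (g n)"
  using M2hat_D(3)[of g] by blast
lemma M2hat_0: "g \<in> M2hat \<Longrightarrow> g 0 = (0,0,0,0)"
  using M2hat_D(1)[of g] by blast

lemma hone_mult: "x \<in> M2hat \<Longrightarrow> hmult hone x = x"
proof
  fix n assume x: "x \<in> M2hat"
  show "hmult hone x n = x n"
  proof (cases "n = 0")
    case True then show ?thesis using x by (simp add: hmult_def M2hat_0)
  next
    case False then show ?thesis using x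
      by (simp add: hmult_def hone_n mm_modL I2_mult M2hat_n)
  qed
qed

lemma M2hat_hmult: assumes "g \<in> M2hat" "h \<in> M2hat" shows "hmult g h \<in> M2hat"
  unfolding M2hat_def
proof (intro CollectI conjI allI impI)
  show "hmult g h 0 = (0,0,0,0)" by (simp add: hmult_def)
  fix n :: nat assume "n > 0" then show "hmult g h n = m2mod n (hmult g h n)"
    by (simp add: hmult_def m2mod_idem)
next
  fix m n :: nat assume mn: "0 < m" "0 < n" "m dvd n"
  then have "m2mod m (hmult g h n) = m2mod m (m2mult (g n) (h n))"
    by (simp add: hmult_def m2mod_mod)
  also have "\<dots> = m2mod m (m2mult (m2mod m (g n)) (m2mod m (h n)))" by (simp add: mm_mod)
  also have "\<dots> = hmult g h m" using mn M2hat_dvd[OF assms(1) mn] M2hat_dvd[OF assms(2) mn]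
    by (simp add: hmult_n)
  finally show "hmult g h m = m2mod m (hmult g h n)" by simp
qed

lemma coprime_det_mod: "coprime (m2det (m2mod n X)) (int n) \<longleftrightarrow> coprime (m2det X) (int n)"
  by (metis coprime_mod_left_iff det_mod of_nat_0_eq_iff coprime_mod_left_iff mod_by_0)

lemma GL2hat_hmult: assumes "g \<in> GL2hat" "h \<in> GL2hat" shows "hmult g h \<in> GL2hat"
  using assms M2hat_hmult unfolding GL2hat_def
  by (auto simp: hmult_n coprime_det_mod det_mult)

lemma hone_GL2: "hone \<in> GL2hat"
proof -
  have "coprime (m2det (m2mod n (1,0,0,1))) (int n)" for n
    by (subst coprime_det_mod) (simp add: m2det_def)
  then show ?thesis unfolding GL2hat_def M2hat_def
    by (auto simp: hone_def m2mod_idem m2mod_mod)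
qed

lemma sigma_GL2: "sigma_hat \<phi> \<in> GL2hat"
proof -
  have "coprime (m2det (m2mod n (1,0,-\<phi>,-1))) (int n)" for n
    by (subst coprime_det_mod) (simp add: m2det_def)
  then show ?thesis unfolding GL2hat_def M2hat_def
    by (auto simp: sigma_hat_def m2mod_idem m2mod_mod)
qed

definition Shp :: "int \<Rightarrow> int \<Rightarrow> (nat \<Rightarrow> m2) \<Rightarrow> bool" where
  "Shp \<delta> \<phi> x \<longleftrightarrow> (\<forall>n>0. (\<exists>a b. x n = m2mod n (cart \<phi> \<delta> a b)) \<or> (\<exists>a b. x n = m2mod n (ss \<phi> \<delta> a b)))"

lemma h5: "(- (u * (b mod n))) mod n = (- (u*b)) mod (n::int)"
  by (metis mod_minus_eq mod_mult_right_eq)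
lemma adj_sm_mod: "m2mod n (sm2 u (adj2 (m2mod n X))) = m2mod n (sm2 u (adj2 X))"
  by (cases X rule: prod_cases4) (simp add: m2mod_def sm2_def adj2_def mod_simps h5)

lemma Normalizer_inv:
  assumes "x \<in> Normalizer_hat \<delta> \<phi>"
  shows "x \<in> GL2hat \<and> Shp \<delta> \<phi> x"
  using assms unfolding Normalizer_hat_def
proof (induction rule: gen_subgroup.induct)
  case (gen_base g)
  then show ?case
  proof
    assume "g \<in> Cartan_hat \<delta> \<phi>"
    then show ?thesis unfolding Cartan_hat_def Shp_def cart_def by blast
  next
    assume "g \<in> {sigma_hat \<phi>}"
    then have g: "g = sigma_hat \<phi>" by simp
    have "ss \<phi> \<delta> 1 0 = (1,0,-\<phi>,-1)" by (simp add: ss_def)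
    then show ?thesis unfolding g Shp_def using sigma_GL2
      by (metis sigma_hat_def not_less0 neq0_conv)
  qed
next
  case gen_one
  have "cart \<phi> \<delta> 1 0 = (1,0,0,1)" by (simp add: cart_def)
  then show ?case using hone_GL2 unfolding Shp_def hone_def by (metis neq0_conv not_less0)
next
  case (gen_mult g h)
  have "Shp \<delta> \<phi> (hmult g h)" unfolding Shp_def
  proof (intro allI impI)
    fix n :: nat assume n: "n > 0"
    have e: "hmult g h n = m2mod n (m2mult (m2mod n X) (m2mod n Y))"
      if "g n = m2mod n X" "h n = m2mod n Y" for X Y using that n by (simp add: hmult_n)
    from gen_mult.IH n have G: "(\<exists>a b. g n = m2mod n (cart \<phi> \<delta> a b)) \<or> (\<exists>a b. g n = m2mod n (ss \<phi> \<delta> a b))"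
      and H: "(\<exists>a b. h n = m2mod n (cart \<phi> \<delta> a b)) \<or> (\<exists>a b. h n = m2mod n (ss \<phi> \<delta> a b))"
      unfolding Shp_def by blast+
    show "(\<exists>a b. hmult g h n = m2mod n (cart \<phi> \<delta> a b)) \<or>
         (\<exists>a b. hmult g h n = m2mod n (ss \<phi> \<delta> a b))"
    proof -
      { fix a b c d
        assume "g n = m2mod n (cart \<phi> \<delta> a b)" "h n = m2mod n (cart \<phi> \<delta> c d)"
        then have ?thesis using e[of "cart \<phi> \<delta> a b" "cart \<phi> \<delta> c d"] by (simp add: mm_mod cart_cart; blast) }
      moreover
      { fix a b c d
        assume "g n = m2mod n (cart \<phi> \<delta> a b)" "h n = m2mod n (ss \<phi> \<delta> c d)"
        then have ?thesis using e[of "cart \<phi> \<delta> a b" "ss \<phi> \<delta> c d"] by (simp add: mm_mod cart_ss; blast) }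
      moreover
      { fix a b c d
        assume "g n = m2mod n (ss \<phi> \<delta> a b)" "h n = m2mod n (cart \<phi> \<delta> c d)"
        then have ?thesis using e[of "ss \<phi> \<delta> a b" "cart \<phi> \<delta> c d"] by (simp add: mm_mod ss_cart; blast) }
      moreover
      { fix a b c d
        assume "g n = m2mod n (ss \<phi> \<delta> a b)" "h n = m2mod n (ss \<phi> \<delta> c d)"
        then have ?thesis using e[of "ss \<phi> \<delta> a b" "ss \<phi> \<delta> c d"] by (simp add: mm_mod ss_ss; blast) }
      ultimately show ?thesis using G H by blast
    qed
  qed
  then show ?case using gen_mult.IH GL2hat_hmult by blast
next
  case (gen_inv g h)
  have "Shp \<delta> \<phi> h" unfolding Shp_def
  proof (intro allI impI)
    fix n :: nat assume n: "n > 0"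
    have "m2mod n (m2mult (g n) (h n)) = m2mod n I2"
      using gen_inv.hyps(3) n hmult_n[of n g h] hone_n[of n] by simp
    then have hn: "h n = m2mod n (sm2 (m2det (h n)) (adj2 (g n)))"
      using gen_inv.hyps(2) n inv_form[of n "g n" "h n"] M2hat_n[of h n] unfolding GL2hat_def by simp
    have e: "h n = m2mod n (sm2 (m2det (h n)) (adj2 X))" if "g n = m2mod n X" for X
      using hn that by (simp add: adj_sm_mod)
    from gen_inv.IH n have G: "(\<exists>a b. g n = m2mod n (cart \<phi> \<delta> a b)) \<or> (\<exists>a b. g n = m2mod n (ss \<phi> \<delta> a b))"
      unfolding Shp_def by blast
    then show "(\<exists>a b. h n = m2mod n (cart \<phi> \<delta> a b)) \<or>
         (\<exists>a b. h n = m2mod n (ss \<phi> \<delta> a b))"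
    proof
      assume "\<exists>a b. g n = m2mod n (cart \<phi> \<delta> a b)"
      then obtain a b where "g n = m2mod n (cart \<phi> \<delta> a b)" by blast
      from e[OF this] show ?thesis unfolding adj_cart sm2_cart by blast
    next
      assume "\<exists>a b. g n = m2mod n (ss \<phi> \<delta> a b)"
      then obtain a b where "g n = m2mod n (ss \<phi> \<delta> a b)" by blast
      from e[OF this] show ?thesis unfolding adj_ss sm2_ss by blast
    qed
  qed
  then show ?case using gen_inv.hyps(2) by blast
qed

lemma eps_idem:
  assumes "m > 0" "t > 0"
  shows "int m dvd (int t ^ fact m) * (int t ^ fact m) - int t ^ fact m"
proof -
  let ?x = "t ^ fact m"
  have x1: "?x \<ge> 1" using assms by simp
  have "m dvd ?x * (?x - 1)" by (rule idem_nat[OF assms])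
  then have "int m dvd int (?x * (?x - 1))" by (simp only: int_dvd_int_iff)
  also have "int (?x * (?x - 1)) = int ?x * (int ?x - 1)" using x1 by (simp add: of_nat_diff)
  finally show ?thesis by (simp add: algebra_simps)
qed

lemma pow_idem:
  fixes x m :: int
  assumes "[x * x = x] (mod m)" "j \<ge> 1"
  shows "[x ^ j = x] (mod m)"
  using assms(2)
proof (induction j)
  case 0 then show ?case by simp
next
  case (Suc j)
  show ?case
  proof (cases "j = 0")
    case True then show ?thesis by simp
  next
    case False
    then have "[x ^ j = x] (mod m)" using Suc by simp
    then have "[x * x ^ j = x * x] (mod m)" by (rule cong_mult[OF cong_refl])
    then show ?thesis using assms(1) by (simp add: cong_trans)
  qed
qed

lemma eps_compat:
  assumes "m > 0" "n > 0" "m dvd n" "t > 0"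
  shows "[int t ^ fact n = int t ^ fact m] (mod int m)"
proof -
  have "m \<le> n" using assms by (simp add: dvd_imp_le)
  then have "(fact m :: nat) dvd fact n" by (rule fact_dvd)
  then obtain j where j: "(fact n :: nat) = fact m * j" by blast
  have "j \<ge> 1" using j by (cases j) auto
  let ?x = "int t ^ fact m"
  have "[?x * ?x = ?x] (mod int m)"
    using eps_idem[OF assms(1) assms(4)] by (simp add: cong_iff_dvd_diff)
  then have "[?x ^ j = ?x] (mod int m)" using \<open>j \<ge> 1\<close> by (rule pow_idem)
  then show ?thesis by (simp add: j power_mult)
qed

lemma h6: "((a::int) + b * p) mod n = (a + b mod n * p) mod n"
  by (metis mod_add_right_eq mod_mult_left_eq)
lemma cart_mod: "m2mod n (cart \<phi> \<delta> a b) = m2mod n (cart \<phi> \<delta> (a mod int n) (b mod int n))"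
  by (simp add: cart_def m2mod_def mod_simps h6[symmetric])

lemma det_cart_eps:
  "m2det (cart \<phi> \<delta> (e*W + 1 - e) (e*Y)) * (e*D' + 1 - e) - 1 =
   e^2 * (m2det (cart \<phi> \<delta> W Y) * D' - 1) +
   (e^2 - e) * (2 - m2det (cart \<phi> \<delta> W Y) - D' +
      (m2det (cart \<phi> \<delta> W Y) - (2*W + Y*\<phi>) + 1) * (e*D' + 1 - e))"
  by (simp add: m2det_def cart_def power2_eq_square algebra_simps)

lemma key_construct:
  fixes k :: "nat \<Rightarrow> m2" and M M' :: nat
  assumes kGL: "k \<in> GL2hat"
    and kC: "\<forall>n>0. \<exists>a b. k n = m2mod n (cart \<phi> \<delta> a b)"
    and M: "M > 0" and M': "M' > 0"
    and kd: "k (gcd M M') = m2mod (gcd M M') I2"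
  shows "\<exists>k1 \<in> Cartan_hat \<delta> \<phi>. k1 M = m2mod M I2 \<and> k1 M' = k M'"
proof -
  define d where "d = gcd M M'"
  have d0: "d > 0" using M by (simp add: d_def)
  define A where "A = M div d"
  define B where "B = M' div d"
  have MA: "M = A * d" unfolding A_def d_def by simp
  have MB: "M' = B * d" unfolding B_def d_def by simp
  have cop: "coprime A B" using div_gcd_coprime[of M M'] M by (simp add: A_def B_def d_def)
  have A0: "A \<noteq> 0" using M MA by auto
  obtain x y where "A * x = B * y + gcd A B" using bezout_nat[OF A0] by blast
  then have xy: "A * x = B * y + 1" using cop by simp
  define t where "t = A * x"
  have t0: "t > 0" using xy t_def by simp
  have kM2: "k \<in> M2hat" using kGL by (simp add: GL2hat_def)
  define W where "W n = snd (snd (snd (k n)))" for n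
  define Y where "Y n = fst (snd (k n))" for n
  have kform: "k n = m2mod n (cart \<phi> \<delta> (W n) (Y n))" if "n > 0" for n
  proof -
    have "\<exists>a b. k n = m2mod n (cart \<phi> \<delta> a b)" using kC that by simp
    then obtain a b where ab: "k n = m2mod n (cart \<phi> \<delta> a b)" by (elim exE)
    have "W n = a mod int n" "Y n = b mod int n" by (simp_all add: W_def Y_def ab m2mod_def cart_def)
    then show ?thesis by (simp only: ab) (rule cart_mod)
  qed
  have WYc: "[W n = W m] (mod int m) \<and> [Y n = Y m] (mod int m)" if "0 < m" "0 < n" "m dvd n" for m n
  proof -
    have e: "k m = m2mod m (k n)" using M2hat_dvd[OF kM2 that] .
    show ?thesis by (cases "k n" rule: prod_cases4) (simp add: e m2mod_def W_def Y_def cong_def)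
  qed
  define \<epsilon> where "\<epsilon> n = int t ^ fact n" for n
  define Fa where "Fa n = \<epsilon> n * W n + 1 - \<epsilon> n" for n
  define Fb where "Fb n = \<epsilon> n * Y n" for n
  have Fc: "[Fa n = Fa m] (mod int m) \<and> [Fb n = Fb m] (mod int m)" if "0 < m" "0 < n" "m dvd n" for m n
  proof -
    have e: "[\<epsilon> n = \<epsilon> m] (mod int m)" unfolding \<epsilon>_def using eps_compat[OF that t0] .
    show ?thesis using WYc[OF that] e unfolding Fa_def Fb_def
      by (intro conjI cong_add cong_mult cong_diff cong_refl) auto
  qed
  define a where "a n = (if n = 0 then 0 else Fa n mod int n)" for n
  define b where "b n = (if n = 0 then 0 else Fb n mod int n)" for n
  define k1 where "k1 n = (if n = 0 then (0,0,0,0) else m2mod n (cart \<phi> \<delta> (Fa n) (Fb n)))" for n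
  have az: "a \<in> zhat" unfolding zhat_def
  proof (intro CollectI conjI allI impI)
    show "a 0 = 0" by (simp add: a_def)
    fix n :: nat assume "n > 0" then show "a n = a n mod int n" by (simp add: a_def)
  next
    fix m n :: nat assume mn: "0 < m" "0 < n" "m dvd n"
    have "a n mod int m = Fa n mod int m" using mn by (simp add: a_def mod_mod_cancel)
    also have "\<dots> = Fa m mod int m" using Fc[OF mn] by (simp add: cong_def)
    finally show "a m = a n mod int m" using mn by (simp add: a_def)
  qed
  have bz: "b \<in> zhat" unfolding zhat_def
  proof (intro CollectI conjI allI impI)
    show "b 0 = 0" by (simp add: b_def)
    fix n :: nat assume "n > 0" then show "b n = b n mod int n" by (simp add: b_def)
  next
    fix m n :: nat assume mn: "0 < m" "0 < n" "m dvd n"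
    have "b n mod int m = Fb n mod int m" using mn by (simp add: b_def mod_mod_cancel)
    also have "\<dots> = Fb m mod int m" using Fc[OF mn] by (simp add: cong_def)
    finally show "b m = b n mod int m" using mn by (simp add: b_def)
  qed
  have k1n: "k1 n = m2mod n (a n + b n * \<phi>, b n, \<delta> * b n, a n)" if "n > 0" for n
    using that cart_mod[of n \<phi> \<delta> "Fa n" "Fb n"] by (simp add: k1_def a_def b_def cart_def)
  have k1M2: "k1 \<in> M2hat" unfolding M2hat_def
  proof (intro CollectI conjI allI impI)
    show "k1 0 = (0,0,0,0)" by (simp add: k1_def)
    fix n :: nat assume "n > 0" then show "k1 n = m2mod n (k1 n)" by (simp add: k1_def m2mod_idem)
  next
    fix m n :: nat assume mn: "0 < m" "0 < n" "m dvd n"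
    have "m2mod m (k1 n) = m2mod m (cart \<phi> \<delta> (Fa n) (Fb n))"
      using mn by (simp add: k1_def m2mod_mod)
    also have "\<dots> = m2mod m (cart \<phi> \<delta> (Fa n mod int m) (Fb n mod int m))" by (rule cart_mod)
    also have "\<dots> = m2mod m (cart \<phi> \<delta> (Fa m mod int m) (Fb m mod int m))"
      using Fc[OF mn] by (simp add: cong_def)
    also have "\<dots> = k1 m" using mn by (simp add: k1_def cart_mod[symmetric])
    finally show "k1 m = m2mod m (k1 n)" by simp
  qed
  have k1det: "coprime (m2det (k1 n)) (int n)" if n: "n > 0" for n
  proof -
    let ?D = "m2det (cart \<phi> \<delta> (W n) (Y n))"
    have "coprime (m2det (k n)) (int n)" using kGL n by (simp add: GL2hat_def)
    then have "coprime ?D (int n)" using kform[OF n] by (simp add: coprime_det_mod)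
    then obtain D' where D': "[?D * D' = 1] (mod int n)" using cong_solve_coprime_int by blast
    let ?e = "\<epsilon> n"
    have ee: "int n dvd ?e * ?e - ?e" unfolding \<epsilon>_def by (rule eps_idem[OF n t0])
    have "int n dvd ?D * D' - 1" using D' by (simp add: cong_iff_dvd_diff)
    then have "int n dvd m2det (cart \<phi> \<delta> (?e * W n + 1 - ?e) (?e * Y n)) * (?e * D' + 1 - ?e) - 1"
      unfolding det_cart_eps using ee by (simp add: power2_eq_square)
    then have "[m2det (cart \<phi> \<delta> (Fa n) (Fb n)) * (?e * D' + 1 - ?e) = 1] (mod int n)"
      by (simp add: cong_iff_dvd_diff Fa_def Fb_def)
    then have "coprime (m2det (cart \<phi> \<delta> (Fa n) (Fb n))) (int n)"
      using coprime_iff_invertible_int by blast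
    then show ?thesis using n by (simp add: k1_def coprime_det_mod)
  qed
  have k1C: "k1 \<in> Cartan_hat \<delta> \<phi>"
    unfolding Cartan_hat_def GL2hat_def using k1M2 k1det az bz k1n by blast
  have dM: "d dvd M" "d dvd M'" by (simp_all add: d_def)
  have congd: "int d dvd W m + Y m * \<phi> - 1 \<and> int d dvd Y m \<and> int d dvd \<delta> * Y m \<and> int d dvd W m - 1"
    if m: "m > 0" "d dvd m" for m
  proof -
    have "m2mod d I2 = k d" using kd by (simp add: d_def)
    also have "\<dots> = m2mod d (k m)" using M2hat_dvd[OF kM2 d0 m(1) m(2)] .
    also have "\<dots> = m2mod d (cart \<phi> \<delta> (W m) (Y m))" using kform[OF m(1)] m(2) by (simp add: m2mod_mod)
    finally show ?thesis unfolding I2_def cart_def m2mod_eq_iff by (simp add: dvd_diff_commute)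
  qed
  have Ae: "int A dvd \<epsilon> M"
  proof -
    have "int A dvd int t" by (simp add: t_def)
    also have "int t dvd \<epsilon> M" unfolding \<epsilon>_def using fact_gt_zero[of M] by (intro dvd_power) auto
    finally show ?thesis .
  qed
  have Be: "int B dvd \<epsilon> M' - 1"
  proof -
    have "[int t = 1] (mod int B)" using xy by (simp add: t_def cong_iff_dvd_diff)
    then have "[int t ^ fact M' = 1 ^ fact M'] (mod int B)" by (rule cong_pow)
    then show ?thesis by (simp add: \<epsilon>_def cong_iff_dvd_diff)
  qed
  have k1M: "k1 M = m2mod M I2"
  proof -
    have c: "int d dvd W M + Y M * \<phi> - 1" "int d dvd Y M" "int d dvd \<delta> * Y M" "int d dvd W M - 1"
      using congd[OF M dM(1)] by auto
    have iM: "int M = int A * int d" using MA by simp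
    have "int M dvd \<epsilon> M * (W M + Y M * \<phi> - 1)" "int M dvd \<epsilon> M * Y M"
         "int M dvd \<epsilon> M * (\<delta> * Y M)" "int M dvd \<epsilon> M * (W M - 1)"
      unfolding iM using Ae c by (auto intro: mult_dvd_mono)
    moreover have "Fa M + Fb M * \<phi> - 1 = \<epsilon> M * (W M + Y M * \<phi> - 1)"
      "Fb M - 0 = \<epsilon> M * Y M" "\<delta> * Fb M - 0 = \<epsilon> M * (\<delta> * Y M)"
      "Fa M - 1 = \<epsilon> M * (W M - 1)" by (simp_all add: Fa_def Fb_def algebra_simps)
    ultimately have "m2mod M (cart \<phi> \<delta> (Fa M) (Fb M)) = m2mod M I2"
      unfolding cart_def I2_def m2mod_eq_iff by simp
    then show ?thesis using M by (simp add: k1_def)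
  qed
  have k1M': "k1 M' = k M'"
  proof -
    have c: "int d dvd W M' + Y M' * \<phi> - 1" "int d dvd Y M'" "int d dvd \<delta> * Y M'" "int d dvd W M' - 1"
      using congd[OF M' dM(2)] by auto
    have iM: "int M' = int B * int d" using MB by simp
    have "int M' dvd (\<epsilon> M' - 1) * (W M' + Y M' * \<phi> - 1)" "int M' dvd (\<epsilon> M' - 1) * Y M'"
         "int M' dvd (\<epsilon> M' - 1) * (\<delta> * Y M')" "int M' dvd (\<epsilon> M' - 1) * (W M' - 1)"
      unfolding iM using Be c by (auto intro: mult_dvd_mono)
    moreover have "(Fa M' + Fb M' * \<phi>) - (W M' + Y M' * \<phi>) = (\<epsilon> M' - 1) * (W M' + Y M' * \<phi> - 1)"
      "Fb M' - Y M' = (\<epsilon> M' - 1) * Y M'" "\<delta> * Fb M' - \<delta> * Y M' = (\<epsilon> M' - 1) * (\<delta> * Y M')"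
      "Fa M' - W M' = (\<epsilon> M' - 1) * (W M' - 1)" by (simp_all add: Fa_def Fb_def algebra_simps)
    ultimately have "m2mod M' (cart \<phi> \<delta> (Fa M') (Fb M')) = m2mod M' (cart \<phi> \<delta> (W M') (Y M'))"
      unfolding cart_def m2mod_eq_iff by simp
    then show ?thesis using M' kform[OF M'] by (simp add: k1_def)
  qed
  show ?thesis using k1C k1M k1M' by blast
qed

lemma CS_all:
  assumes kN: "k \<in> Normalizer_hat \<delta> \<phi>" and e: "e \<ge> 3" and ke: "k e = m2mod e I2"
  shows "\<forall>n>0. \<exists>a b. k n = m2mod n (cart \<phi> \<delta> a b)"
proof (intro allI impI)
  fix n :: nat assume n: "n > 0"
  have kGL: "k \<in> GL2hat" and sh: "Shp \<delta> \<phi> k" using Normalizer_inv[OF kN] by auto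
  have kM2: "k \<in> M2hat" using kGL by (simp add: GL2hat_def)
  have e0: "e > 0" using e by simp
  have n': "n * e > 0" using n e0 by simp
  from sh n' have "(\<exists>a b. k (n*e) = m2mod (n*e) (cart \<phi> \<delta> a b)) \<or> (\<exists>a b. k (n*e) = m2mod (n*e) (ss \<phi> \<delta> a b))"
    unfolding Shp_def by simp
  then show "\<exists>a b. k n = m2mod n (cart \<phi> \<delta> a b)"
  proof
    assume "\<exists>a b. k (n*e) = m2mod (n*e) (cart \<phi> \<delta> a b)"
    then obtain a b where ab: "k (n*e) = m2mod (n*e) (cart \<phi> \<delta> a b)" by (elim exE)
    have "k n = m2mod n (k (n*e))" using M2hat_dvd[OF kM2 n n'] by simp
    also have "\<dots> = m2mod n (cart \<phi> \<delta> a b)" by (simp add: ab m2mod_mod)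
    finally show ?thesis by blast
  next
    assume "\<exists>a b. k (n*e) = m2mod (n*e) (ss \<phi> \<delta> a b)"
    then obtain a b where ab: "k (n*e) = m2mod (n*e) (ss \<phi> \<delta> a b)" by (elim exE)
    have "m2mod e I2 = m2mod e (k (n*e))" using M2hat_dvd[OF kM2 e0 n'] ke by simp
    also have "\<dots> = m2mod e (ss \<phi> \<delta> a b)" by (simp add: ab m2mod_mod)
    finally have "m2mod e (ss \<phi> \<delta> a b) = m2mod e I2" by simp
    then have c: "int e dvd (a + b*\<phi>) - 1" "int e dvd (-\<phi>*b - a) - 1"
      unfolding ss_def I2_def m2mod_eq_iff by auto
    have "int e dvd ((a + b*\<phi>) - 1) + ((-\<phi>*b - a) - 1)" using c by (rule dvd_add)
    also have "((a + b*\<phi>) - 1) + ((-\<phi>*b - a) - 1) = -2" by (simp add: algebra_simps)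
    finally have "int e dvd 2" by simp
    then have "e dvd 2" by presburger
    then have "e \<le> 2" by (simp add: dvd_imp_le)
    then show ?thesis using e by simp
  qed
qed

lemma level_main:
  assumes G: "closed_subgroup_hat G" and GN: "G \<subseteq> Normalizer_hat \<delta> \<phi>"
    and M: "M > 0" and M': "M' > 0"
    and LM: "adelic_level \<delta> \<phi> G M" and LM': "adelic_level \<delta> \<phi> G M'"
    and e: "e \<ge> 3" and de: "gcd M M' dvd e"
  shows "adelic_level \<delta> \<phi> G e"
proof -
  have GGL: "G \<subseteq> GL2hat" and hoG: "hone \<in> G" and mulG: "\<And>x y. x \<in> G \<Longrightarrow> y \<in> G \<Longrightarrow> hmult x y \<in> G"
    and invG: "\<And>x. x \<in> G \<Longrightarrow> \<exists>y\<in>G. hmult x y = hone"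
    using G unfolding closed_subgroup_hat_def by auto
  have Nmul: "\<And>x y. x \<in> Normalizer_hat \<delta> \<phi> \<Longrightarrow> y \<in> Normalizer_hat \<delta> \<phi> \<Longrightarrow> hmult x y \<in> Normalizer_hat \<delta> \<phi>"
    unfolding Normalizer_hat_def by (rule gen_subgroup.gen_mult)
  have e0: "e > 0" using e by simp
  define d where "d = gcd M M'"
  have d0: "d > 0" using M by (simp add: d_def)
  have LMe: "G = {h \<in> Normalizer_hat \<delta> \<phi>. \<exists>g\<in>G. piN M h = piN M g}" using LM by (simp add: adelic_level_def)
  have LMe': "G = {h \<in> Normalizer_hat \<delta> \<phi>. \<exists>g\<in>G. piN M' h = piN M' g}" using LM' by (simp add: adelic_level_def)
  have sub: "h \<in> G" if hN: "h \<in> Normalizer_hat \<delta> \<phi>" and gG: "g \<in> G" and hg: "h e = g e" for h g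
  proof -
    obtain g' where g'G: "g' \<in> G" and gg': "hmult g g' = hone" using invG[OF gG] by blast
    define k where "k = hmult g' h"
    have kN: "k \<in> Normalizer_hat \<delta> \<phi>" unfolding k_def using Nmul g'G GN hN by blast
    have kGL: "k \<in> GL2hat" using Normalizer_inv[OF kN] by simp
    have hM2: "h \<in> M2hat" using Normalizer_inv[OF hN] by (simp add: GL2hat_def)
    have kM2: "k \<in> M2hat" using kGL by (simp add: GL2hat_def)
    have "m2mod e (m2mult (g e) (g' e)) = m2mod e I2"
      using gg' e0 hmult_n[of e g g'] hone_n[of e] by simp
    then have f: "m2mod e (m2mult (g' e) (g e)) = m2mod e I2" by (rule flip)
    have ke: "k e = m2mod e I2" using f e0 hg by (simp add: k_def hmult_n)
    have kC: "\<forall>n>0. \<exists>a b. k n = m2mod n (cart \<phi> \<delta> a b)" by (rule CS_all[OF kN e ke])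
    have kd: "k d = m2mod d I2"
    proof -
      have "k d = m2mod d (k e)" using M2hat_dvd[OF kM2 d0 e0] de by (simp add: d_def)
      also have "\<dots> = m2mod d I2" using ke de by (simp add: m2mod_mod d_def)
      finally show ?thesis .
    qed
    obtain k1 where k1C: "k1 \<in> Cartan_hat \<delta> \<phi>" and k1M: "k1 M = m2mod M I2" and k1M': "k1 M' = k M'"
      using key_construct[OF kGL kC M M'] kd by (auto simp: d_def)
    have k1N: "k1 \<in> Normalizer_hat \<delta> \<phi>" unfolding Normalizer_hat_def
      using k1C by (intro gen_subgroup.gen_base) simp
    have k1G: "k1 \<in> G"
    proof -
      have "piN M k1 = piN M hone" using k1M M by (simp add: piN_def hone_n)
      then have "k1 \<in> {h \<in> Normalizer_hat \<delta> \<phi>. \<exists>g\<in>G. piN M h = piN M g}" using k1N hoG by blast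
      then show ?thesis using LMe by blast
    qed
    obtain k1' where k1'G: "k1' \<in> G" and kk: "hmult k1 k1' = hone" using invG[OF k1G] by blast
    define k2 where "k2 = hmult k1' k"
    have k2N: "k2 \<in> Normalizer_hat \<delta> \<phi>" unfolding k2_def using Nmul k1'G GN kN by blast
    have k2G: "k2 \<in> G"
    proof -
      have "m2mod M' (m2mult (k1 M') (k1' M')) = m2mod M' I2"
        using kk M' hmult_n[of M' k1 k1'] hone_n[of M'] by simp
      then have f: "m2mod M' (m2mult (k1' M') (k1 M')) = m2mod M' I2" by (rule flip)
      have "piN M' k2 = piN M' hone" using f M' k1M' by (simp add: piN_def hone_n k2_def hmult_n)
      then have "k2 \<in> {h \<in> Normalizer_hat \<delta> \<phi>. \<exists>g\<in>G. piN M' h = piN M' g}" using k2N hoG by blast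
      then show ?thesis using LMe' by blast
    qed
    have "hmult k1 k2 = k" unfolding k2_def by (simp add: hmult_assoc kk hone_mult[OF kM2])
    then have "hmult g (hmult k1 k2) = h" by (simp add: k_def hmult_assoc gg' hone_mult[OF hM2])
    moreover have "hmult g (hmult k1 k2) \<in> G" using mulG gG k1G k2G by blast
    ultimately show ?thesis by simp
  qed
  show ?thesis unfolding adelic_level_def
  proof
    show "G \<subseteq> {h \<in> Normalizer_hat \<delta> \<phi>. \<exists>g\<in>G. piN e h = piN e g}" using GN by blast
    show "{h \<in> Normalizer_hat \<delta> \<phi>. \<exists>g\<in>G. piN e h = piN e g} \<subseteq> G"
      using sub by (auto simp: piN_def)
  qed
qed

theorem mainTheorem5:
  fixes DK f :: int and G :: "(nat \<Rightarrow> m2) set" and M M' :: nat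
  assumes "fundamental_discriminant DK" and "DK < 0" and "f \<ge> 1"
    and "DK * f^2 \<noteq> -3" and "DK * f^2 \<noteq> -4"
    and "closed_subgroup_hat G"
    and "G \<subseteq> Normalizer_hat (delta_of DK f) (phi_of DK f)"
    and "M \<ge> 2" and "M' \<ge> 2"
    and "adelic_level (delta_of DK f) (phi_of DK f) G M"
    and "adelic_level (delta_of DK f) (phi_of DK f) G M'"
  shows "(gcd M M' \<ge> 3 \<longrightarrow> adelic_level (delta_of DK f) (phi_of DK f) G (gcd M M'))
       \<and> (gcd M M' = 2 \<longrightarrow> adelic_level (delta_of DK f) (phi_of DK f) G 4)"
proof (intro conjI impI)
  have M: "M > 0" and M': "M' > 0" using assms by auto
  show "adelic_level (delta_of DK f) (phi_of DK f) G (gcd M M')" if "gcd M M' \<ge> 3"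
    using level_main[OF assms(6) assms(7) M M' assms(10) assms(11) that] by simp
  show "adelic_level (delta_of DK f) (phi_of DK f) G 4" if "gcd M M' = 2"
    using level_main[OF assms(6) assms(7) M M' assms(10) assms(11), of 4] that by simp
qed

end
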